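(* Let $(w_1,w_2,w_3)\in(0,\infty)^3$ with $w_1+w_2+w_3\ge2\max\{w_1,w_2,w_3\}$, and put $z_1=\frac{w_2+w_3-w_1}{2w_2}$, $z_2=\frac{w_3+w_1-w_2}{2w_3}$, $z_3=\frac{w_1+w_2-w_3}{2w_1}$, so $z_i\in[0,1]$. Let $\overrightarrow{p_1}=(1,z_1,0)$, $\overrightarrow{p_2}=(0,1,z_2)$, $\overrightarrow{p_3}=(z_3,0,1)$, and let $m_{12},m_{23},m_{31}$ be given by $$m_{12}=\frac{(1-z_1)(1-z_2)(1-z_3)-(1-z_1)(1-z_2)+(1-z_1)}{(1-z_1)(1-z_2)(1-z_3)+1},$$ $$m_{23}=\frac{(1-z_1)(1-z_2)(1-z_3)-(1-z_2)(1-z_3)+(1-z_2)}{(1-z_1)(1-z_2)(1-z_3)+1},$$ $$m_{31}=\frac{(1-z_1)(1-z_2)(1-z_3)-(1-z_3)(1-z_1)+(1-z_3)}{(1-z_1)(1-z_2)(1-z_3)+1}.$$ Then $m_{12},m_{23},m_{31}\ge0$, $m_{12}+m_{23}+m_{31}=1$, and the probability measure on $[0,1]^3$ placing mass $m_{12}$, $m_{23}$, $m_{31}$ uniformly on the segments $[\overrightarrow{p_1},\overrightarrow{p_2}]$, $[\overrightarrow{p_2},\overrightarrow{p_3}]$, $[\overrightarrow{p_3},\overrightarrow{p_1}]$ respectively has uniform$[0,1]$ marginals and is supported on the plane $w_1u_1+w_2u_2+w_3u_3=\frac{w_1+w_2+w_3}{2}$.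
   Context: "Mass $m$ uniformly on the segment $[\overrightarrow{p},\overrightarrow{q}]$" means the measure $m$ times the law of $t\overrightarrow{p}+(1-t)\overrightarrow{q}$ with $t$ uniform on $[0,1]$. *)

theory Defs
  imports "HOL-Analysis.Analysis" "HOL-Probability.Probability"
begin

definition segment_law :: "real^3 \<Rightarrow> real^3 \<Rightarrow> (real^3) measure" where
  "segment_law p q = distr (uniform_measure lborel {0..1::real}) borel (\<lambda>t. t *\<^sub>R p + (1 - t) *\<^sub>R q)"

definition triangle_measure ::
  "real \<Rightarrow> real \<Rightarrow> real \<Rightarrow> real^3 \<Rightarrow> real^3 \<Rightarrow> real^3 \<Rightarrow> (real^3) measure" where
  "triangle_measure a b c p1 p2 p3 = measure_of UNIV (sets borel)
     (\<lambda>A. ennreal a * emeasure (segment_law p1 p2) A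
        + ennreal b * emeasure (segment_law p2 p3) A
        + ennreal c * emeasure (segment_law p3 p1) A)"

end

theory Submission
  imports Defs
begin

lemma emeasure_triangle:
  assumes "A \<in> sets borel"
  shows "emeasure (triangle_measure a b c p1 p2 p3) A =
     ennreal a * emeasure (segment_law p1 p2) A
        + ennreal b * emeasure (segment_law p2 p3) A
        + ennreal c * emeasure (segment_law p3 p1) A"
  unfolding triangle_measure_def
proof (rule emeasure_measure_of_sigma)
  show "sigma_algebra UNIV (sets borel)"
    by (metis sets.sigma_algebra_axioms space_borel)
  show "positive (sets borel) (\<lambda>A. ennreal a * emeasure (segment_law p1 p2) A
        + ennreal b * emeasure (segment_law p2 p3) A
        + ennreal c * emeasure (segment_law p3 p1) A)"
    by (simp add: positive_def)
  show "countably_additive (sets borel) (\<lambda>A. ennreal a * emeasure (segment_law p1 p2) A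
        + ennreal b * emeasure (segment_law p2 p3) A
        + ennreal c * emeasure (segment_law p3 p1) A)"
    unfolding countably_additive_def
  proof (intro allI impI)
    fix F :: "nat \<Rightarrow> (real^3) set"
    assume F: "range F \<subseteq> sets borel" "disjoint_family F" "\<Union> (range F) \<in> sets borel"
    have s: "sets (segment_law p q) = sets borel" for p q by (simp add: segment_law_def)
    have e: "(\<Sum>i. emeasure (segment_law p q) (F i)) = emeasure (segment_law p q) (\<Union> (range F))" for p q
      by (rule suminf_emeasure) (use F s in auto)
    show "(\<Sum>i. ennreal a * emeasure (segment_law p1 p2) (F i)
        + ennreal b * emeasure (segment_law p2 p3) (F i)
        + ennreal c * emeasure (segment_law p3 p1) (F i)) =
      ennreal a * emeasure (segment_law p1 p2) (\<Union> (range F))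
        + ennreal b * emeasure (segment_law p2 p3) (\<Union> (range F))
        + ennreal c * emeasure (segment_law p3 p1) (\<Union> (range F))"
      by (simp add: suminf_add[symmetric] e[symmetric])
  qed
qed (fact assms)

lemma aff:
  fixes c d :: real
  assumes d: "d \<noteq> 0" and B: "B \<in> sets borel"
  shows "emeasure lborel B = ennreal \<bar>d\<bar> * emeasure lborel ((\<lambda>t. c + d*t) -` B)"
proof -
  have eq: "lborel = density (distr lborel borel (\<lambda>x. c + d * x)) (\<lambda>_. ennreal \<bar>d\<bar>)"
    by (rule lborel_real_affine[OF d])
  have "emeasure lborel B = emeasure (density (distr lborel borel (\<lambda>x. c + d * x)) (\<lambda>_. ennreal \<bar>d\<bar>)) B"
    using eq by metis
  also have "\<dots> = ennreal \<bar>d\<bar> * emeasure lborel ((\<lambda>t. c + d*t) -` B)"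
    using B by (simp add: emeasure_density emeasure_distr nn_integral_cmult_indicator)
  finally show ?thesis .
qed

lemma seg_emeasure:
  assumes N: "N \<in> sets borel"
  shows "emeasure (segment_law p q) N = emeasure lborel ({0..1} \<inter> (\<lambda>t. t *\<^sub>R p + (1 - t) *\<^sub>R q) -` N)"
proof -
  have m: "(\<lambda>t::real. t *\<^sub>R p + (1 - t) *\<^sub>R q) \<in> borel_measurable borel" by measurable
  have "(\<lambda>t::real. t *\<^sub>R p + (1 - t) *\<^sub>R q) -` N \<in> sets borel"
    using measurable_sets[OF m N] by simp
  then show ?thesis
    unfolding segment_law_def using N m by (subst emeasure_distr) (auto simp: Int_commute divide_ennreal_def)
qed

lemma seg_coord:
  assumes A: "A \<in> sets borel"
  shows "emeasure (segment_law p q) {u. u $ i \<in> A} = emeasure lborel {t\<in>{0..1}. q$i + (p$i - q$i)*t \<in> A}"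
proof -
  have "{u. u $ i \<in> A} \<in> sets (borel :: (real^3) measure)"
    using A by measurable
  then have "emeasure (segment_law p q) {u. u $ i \<in> A} = emeasure lborel ({0..1} \<inter> (\<lambda>t. t *\<^sub>R p + (1 - t) *\<^sub>R q) -` {u. u $ i \<in> A})"
    by (rule seg_emeasure)
  also have "({0..1} \<inter> (\<lambda>t. t *\<^sub>R p + (1 - t) *\<^sub>R q) -` {u. u $ i \<in> A}) = {t\<in>{0..1}. q$i + (p$i - q$i)*t \<in> A}"
    by (auto simp: algebra_simps)
  finally show ?thesis .
qed

lemma scaled:
  fixes c d k :: real
  assumes k: "k \<ge> 0" and A: "A \<in> sets borel"
  shows "ennreal (\<bar>d\<bar>*k) * emeasure lborel {t\<in>{0..1}. c + d*t \<in> A} = ennreal k * emeasure lborel (A \<inter> {min c (c+d)..max c (c+d)})"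
proof (cases "d = 0")
  case True
  have "emeasure lborel (A \<inter> {min c (c+d)..max c (c+d)}) \<le> emeasure lborel {c..c}"
    using True A by (intro emeasure_mono) auto
  then have "emeasure lborel (A \<inter> {min c (c+d)..max c (c+d)}) = 0" by simp
  then show ?thesis using True by simp
next
  case False
  have B: "A \<inter> {min c (c+d)..max c (c+d)} \<in> sets borel" using A by simp
  have pre: "(\<lambda>t. c + d*t) -` (A \<inter> {min c (c+d)..max c (c+d)}) = {t\<in>{0..1}. c + d*t \<in> A}"
  proof (cases "d > 0")
    case True
    then show ?thesis
      by (auto simp: min_def max_def mult_le_cancel_left1 mult_le_cancel_left2 zero_le_mult_iff mult_le_0_iff)
  next
    case False
    with \<open>d \<noteq> 0\<close> have "d < 0" by simp
    then show ?thesis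
      by (auto simp: min_def max_def mult_le_cancel_left1 mult_le_cancel_left2 zero_le_mult_iff mult_le_0_iff)
  qed
  show ?thesis
    using aff[OF False B, of c] pre k by (simp add: ennreal_mult mult_ac)
qed

lemma combine:
  fixes z m :: real
  assumes z: "0 \<le> z" "z \<le> 1" and m: "0 \<le> m" "m \<le> 1" and A: "A \<in> sets borel"
  shows "ennreal m * emeasure lborel (A \<inter> {0..1}) + ennreal (1-m) * emeasure lborel (A \<inter> {0..z})
        + ennreal (1-m) * emeasure lborel (A \<inter> {z..1}) = emeasure lborel (A \<inter> {0..1})"
proof -
  have n: "emeasure lborel (A \<inter> {z..z}) = 0"
  proof -
    have "emeasure lborel (A \<inter> {z..z}) \<le> emeasure lborel {z..z}"
      using A by (intro emeasure_mono) auto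
    then show ?thesis by simp
  qed
  have "emeasure lborel (A \<inter> {0..z}) + emeasure lborel (A \<inter> {z..1})
      = emeasure lborel (A \<inter> {0..z}) + emeasure lborel (A \<inter> {z..1}) - emeasure lborel (A \<inter> {z..z})"
    using n by simp
  also have "\<dots> = emeasure lborel (A \<inter> {0..1})"
  proof -
    have "emeasure lborel ((A \<inter> {0..z}) \<union> (A \<inter> {z..1})) + emeasure lborel ((A \<inter> {0..z}) \<inter> (A \<inter> {z..1}))
        = emeasure lborel (A \<inter> {0..z}) + emeasure lborel (A \<inter> {z..1})"
      using A emeasure_Un_Int[of "A \<inter> {0..z}" lborel "A \<inter> {z..1}"] by simp
    moreover have "(A \<inter> {0..z}) \<union> (A \<inter> {z..1}) = A \<inter> {0..1}" using z by auto
    moreover have "(A \<inter> {0..z}) \<inter> (A \<inter> {z..1}) = A \<inter> {z..z}" using z by auto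
    ultimately show ?thesis using n by simp
  qed
  finally have s: "emeasure lborel (A \<inter> {0..z}) + emeasure lborel (A \<inter> {z..1}) = emeasure lborel (A \<inter> {0..1})" .
  have "ennreal m * emeasure lborel (A \<inter> {0..1}) + ennreal (1-m) * emeasure lborel (A \<inter> {0..z})
        + ennreal (1-m) * emeasure lborel (A \<inter> {z..1})
     = ennreal m * emeasure lborel (A \<inter> {0..1}) + ennreal (1-m) * (emeasure lborel (A \<inter> {0..z})
        + emeasure lborel (A \<inter> {z..1}))"
    by (simp add: distrib_left add.assoc)
  also have "\<dots> = (ennreal m + ennreal (1-m)) * emeasure lborel (A \<inter> {0..1})"
    using s by (simp add: distrib_right)
  also have "ennreal m + ennreal (1-m) = 1"
    using m by (subst ennreal_plus[symmetric]) auto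
  finally show ?thesis by simp
qed

lemma sets_triangle[simp]: "sets (triangle_measure a b c p1 p2 p3) = sets borel"
  unfolding triangle_measure_def using sets.sigma_sets_eq[of borel] by (simp add: sets_measure_of_conv)

lemma space_triangle[simp]: "space (triangle_measure a b c p1 p2 p3) = UNIV"
  unfolding triangle_measure_def by (simp add: space_measure_of_conv)

lemma seg_empty:
  assumes N: "N \<in> sets borel" and h: "\<And>t. t \<in> {0..1} \<Longrightarrow> t *\<^sub>R p + (1 - t) *\<^sub>R q \<notin> N"
  shows "emeasure (segment_law p q) N = 0"
proof -
  have "{0..1} \<inter> (\<lambda>t. t *\<^sub>R p + (1 - t) *\<^sub>R q) -` N = {}" using h by auto
  then show ?thesis using seg_emeasure[OF N] by simp
qed

lemma AE_tri:
  assumes N: "{u. \<not> P u} \<in> sets borel"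
   and h1: "\<And>t. t \<in> {0..1} \<Longrightarrow> P (t *\<^sub>R p1 + (1 - t) *\<^sub>R p2)"
   and h2: "\<And>t. t \<in> {0..1} \<Longrightarrow> P (t *\<^sub>R p2 + (1 - t) *\<^sub>R p3)"
   and h3: "\<And>t. t \<in> {0..1} \<Longrightarrow> P (t *\<^sub>R p3 + (1 - t) *\<^sub>R p1)"
  shows "AE u in triangle_measure a b c p1 p2 p3. P u"
proof (rule AE_I')
  have "emeasure (triangle_measure a b c p1 p2 p3) {u. \<not> P u} = 0"
  proof -
    have "emeasure (segment_law p1 p2) {u. \<not> P u} = 0" by (rule seg_empty[OF N]) (use h1 in auto)
    moreover have "emeasure (segment_law p2 p3) {u. \<not> P u} = 0" by (rule seg_empty[OF N]) (use h2 in auto)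
    moreover have "emeasure (segment_law p3 p1) {u. \<not> P u} = 0" by (rule seg_empty[OF N]) (use h3 in auto)
    ultimately show ?thesis using emeasure_triangle[OF N] by simp
  qed
  then show "{u. \<not> P u} \<in> null_sets (triangle_measure a b c p1 p2 p3)"
    using N by (simp add: null_sets_def)
qed auto

lemma distr_coord:
  fixes \<mu> :: "(real^3) measure"
  assumes s: "sets \<mu> = sets borel" "space \<mu> = UNIV"
   and h: "\<And>A. A \<in> sets borel \<Longrightarrow> emeasure \<mu> {u. u $ i \<in> A} = emeasure lborel (A \<inter> {0..1})"
  shows "distr \<mu> borel (\<lambda>u. u $ i) = uniform_measure lborel {0..1::real}"
proof (rule measure_eqI)
  show "sets (distr \<mu> borel (\<lambda>u. u $ i)) = sets (uniform_measure lborel {0..1::real})" by simp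
  fix A assume A: "A \<in> sets (distr \<mu> borel (\<lambda>u. u $ i))"
  then have A': "A \<in> sets borel" by simp
  have m: "(\<lambda>u. u $ i) \<in> measurable \<mu> borel" by (subst measurable_cong_sets[OF s(1) refl]) measurable
  have "emeasure (distr \<mu> borel (\<lambda>u. u $ i)) A = emeasure \<mu> ((\<lambda>u. u $ i) -` A \<inter> space \<mu>)"
    using A' m by (rule_tac emeasure_distr) auto
  also have "\<dots> = emeasure lborel (A \<inter> {0..1})" using h[OF A'] s by (simp add: vimage_def)
  finally show "emeasure (distr \<mu> borel (\<lambda>u. u $ i)) A = emeasure (uniform_measure lborel {0..1::real}) A"
    using A' by (simp add: divide_ennreal_def Int_commute)
qed

lemma seg_part:
  assumes A: "A \<in> sets borel" and k: "k \<ge> 0"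
    and M: "M = \<bar>p$i - q$i\<bar> * k" and lo: "lo = min (q$i) (p$i)" and hi: "hi = max (q$i) (p$i)"
  shows "ennreal M * emeasure (segment_law p q) {u. u $ i \<in> A} = ennreal k * emeasure lborel (A \<inter> {lo..hi})"
  using scaled[OF k A, of "p$i - q$i" "q$i"] seg_coord[OF A, of p q i] M lo hi by simp

lemma conv_box:
  fixes p q :: "real^3"
  assumes "\<forall>i. p$i \<in> {0..1}" "\<forall>i. q$i \<in> {0..1}" "t \<in> {0..1}"
  shows "\<forall>i. (t *\<^sub>R p + (1 - t) *\<^sub>R q) $ i \<in> {0..1}"
proof
  fix i
  have a: "0 \<le> p$i" "p$i \<le> 1" "0 \<le> q$i" "q$i \<le> 1" "0 \<le> t" "t \<le> 1" using assms by auto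
  have "0 \<le> t * p$i" "0 \<le> (1-t) * q$i" using a by auto
  moreover have "t * p$i \<le> t" "(1-t) * q$i \<le> 1 - t" using a by (auto intro: mult_left_le)
  ultimately show "(t *\<^sub>R p + (1 - t) *\<^sub>R q) $ i \<in> {0..1}" by simp
qed

lemma conv_plane:
  fixes p q :: "real^3"
  assumes "w1 * p$1 + w2 * p$2 + w3 * p$3 = s" "w1 * q$1 + w2 * q$2 + w3 * q$3 = s"
  shows "w1 * (t *\<^sub>R p + (1 - t) *\<^sub>R q)$1 + w2 * (t *\<^sub>R p + (1 - t) *\<^sub>R q)$2 + w3 * (t *\<^sub>R p + (1 - t) *\<^sub>R q)$3 = s"
proof -
  have "w1 * (t *\<^sub>R p + (1 - t) *\<^sub>R q)$1 + w2 * (t *\<^sub>R p + (1 - t) *\<^sub>R q)$2 + w3 * (t *\<^sub>R p + (1 - t) *\<^sub>R q)$3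
     = t * (w1 * p$1 + w2 * p$2 + w3 * p$3) + (1-t) * (w1 * q$1 + w2 * q$2 + w3 * q$3)"
    by (simp add: algebra_simps)
  also have "\<dots> = s" using assms by (simp add: algebra_simps)
  finally show ?thesis .
qed

lemma alg:
  fixes w1 w2 w3 :: real
  assumes pos: "w1 > 0" "w2 > 0" "w3 > 0"
    and tri: "w1 + w2 + w3 \<ge> 2 * Max {w1, w2, w3}"
  defines "z1 \<equiv> (w2 + w3 - w1) / (2 * w2)"
    and "z2 \<equiv> (w3 + w1 - w2) / (2 * w3)"
    and "z3 \<equiv> (w1 + w2 - w3) / (2 * w1)"
  defines "P \<equiv> (1 - z1) * (1 - z2) * (1 - z3)"
  defines "m12 \<equiv> (P - (1 - z1) * (1 - z2) + (1 - z1)) / (P + 1)"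
    and "m23 \<equiv> (P - (1 - z2) * (1 - z3) + (1 - z2)) / (P + 1)"
    and "m31 \<equiv> (P - (1 - z3) * (1 - z1) + (1 - z3)) / (P + 1)"
  shows "z1 \<in> {0..1} \<and> z2 \<in> {0..1} \<and> z3 \<in> {0..1}
    \<and> m12 \<ge> 0 \<and> m23 \<ge> 0 \<and> m31 \<ge> 0 \<and> m12 + m23 + m31 = 1
    \<and> m31 = (1-z3)*(1-m12) \<and> m23 = z3*(1-m12)
    \<and> m12 = (1-z1)*(1-m23) \<and> m31 = z1*(1-m23)
    \<and> m23 = (1-z2)*(1-m31) \<and> m12 = z2*(1-m31)"
proof -
  have w: "w1 \<le> w2+w3" "w2 \<le> w1+w3" "w3 \<le> w1+w2" using tri by (auto simp: max_def split: if_splits)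
  have z1: "0 \<le> z1" "z1 \<le> 1" using pos w unfolding z1_def by (auto simp: divide_simps)
  have z2: "0 \<le> z2" "z2 \<le> 1" using pos w unfolding z2_def by (auto simp: divide_simps)
  have z3: "0 \<le> z3" "z3 \<le> 1" using pos w unfolding z3_def by (auto simp: divide_simps)
  have P0: "P \<ge> 0" unfolding P_def using z1 z2 z3 by simp
  have Pd: "P + 1 > 0" using P0 by simp
  have n12: "P - (1 - z1) * (1 - z2) + (1 - z1) = (1-z1) * (1 - (1-z2)*z3)" unfolding P_def by algebra
  have n23: "P - (1 - z2) * (1 - z3) + (1 - z2) = (1-z2) * (1 - (1-z3)*z1)" unfolding P_def by algebra
  have n31: "P - (1 - z3) * (1 - z1) + (1 - z3) = (1-z3) * (1 - (1-z1)*z2)" unfolding P_def by algebra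
  have le1: "(1-z2)*z3 \<le> 1" "(1-z3)*z1 \<le> 1" "(1-z1)*z2 \<le> 1"
    using z1 z2 z3 by (auto intro: mult_le_one)
  have g: "m12 \<ge> 0 \<and> m23 \<ge> 0 \<and> m31 \<ge> 0"
    unfolding m12_def m23_def m31_def n12 n23 n31 using Pd z1 z2 z3 le1 by simp
  have key: "2*P - ((1-z1)*(1-z2)+(1-z2)*(1-z3)+(1-z3)*(1-z1)) + (1-z1)+(1-z2)+(1-z3) - 1 = 0"
    unfolding P_def z1_def z2_def z3_def using pos by (simp add: field_simps)
  have s: "m12 + m23 + m31 = 1"
  proof -
    have "m12 + m23 + m31 = ((P - (1 - z1) * (1 - z2) + (1 - z1)) + (P - (1 - z2) * (1 - z3) + (1 - z2))
       + (P - (1 - z3) * (1 - z1) + (1 - z3))) / (P + 1)"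
      unfolding m12_def m23_def m31_def by (metis add_divide_distrib)
    also have "(P - (1 - z1) * (1 - z2) + (1 - z1)) + (P - (1 - z2) * (1 - z3) + (1 - z2))
       + (P - (1 - z3) * (1 - z1) + (1 - z3)) = P + 1" using key by linarith
    finally show ?thesis using Pd by simp
  qed
  have d: "P + 1 \<noteq> 0" using Pd by simp
  have r1: "m31 = (1-z3)*(1-m12)" "m12 = (1-z1)*(1-m23)" "m23 = (1-z2)*(1-m31)"
    unfolding m12_def m23_def m31_def using d by (simp_all add: field_simps P_def)
  have e1: "m23 = 1 - m12 - m31" "m31 = 1 - m12 - m23" "m12 = 1 - m23 - m31" using s by linarith+
  have r2: "m23 = z3*(1-m12)" unfolding e1(1) r1(1) by (simp add: algebra_simps)
  have r3: "m31 = z1*(1-m23)" unfolding e1(2) r1(2) by (simp add: algebra_simps)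
  have r4: "m12 = z2*(1-m31)" unfolding e1(3) r1(3) by (simp add: algebra_simps)
  show ?thesis unfolding atLeastAtMost_iff using z1 z2 z3 g s r1 r2 r3 r4 by blast
qed

lemma box3:
  assumes "a \<in> {0..1}" "b \<in> {0..1}" "c \<in> {0..1::real}"
  shows "\<forall>i. (vector [a,b,c] :: real^3) $ i \<in> {0..1}"
proof
  fix i :: 3
  from exhaust_3[of i] show "(vector [a,b,c] :: real^3) $ i \<in> {0..1}" using assms by auto
qed

theorem mainTheorem5:
  fixes w1 w2 w3 :: real
  assumes pos: "w1 > 0" "w2 > 0" "w3 > 0"
    and tri: "w1 + w2 + w3 \<ge> 2 * Max {w1, w2, w3}"
  defines "z1 \<equiv> (w2 + w3 - w1) / (2 * w2)"
    and "z2 \<equiv> (w3 + w1 - w2) / (2 * w3)"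
    and "z3 \<equiv> (w1 + w2 - w3) / (2 * w1)"
  defines "p1 \<equiv> vector [1, z1, 0] :: real^3"
    and "p2 \<equiv> vector [0, 1, z2] :: real^3"
    and "p3 \<equiv> vector [z3, 0, 1] :: real^3"
  defines "P \<equiv> (1 - z1) * (1 - z2) * (1 - z3)"
  defines "m12 \<equiv> (P - (1 - z1) * (1 - z2) + (1 - z1)) / (P + 1)"
    and "m23 \<equiv> (P - (1 - z2) * (1 - z3) + (1 - z2)) / (P + 1)"
    and "m31 \<equiv> (P - (1 - z3) * (1 - z1) + (1 - z3)) / (P + 1)"
  defines "\<mu> \<equiv> triangle_measure m12 m23 m31 p1 p2 p3"
  shows "z1 \<in> {0..1} \<and> z2 \<in> {0..1} \<and> z3 \<in> {0..1}
    \<and> m12 \<ge> 0 \<and> m23 \<ge> 0 \<and> m31 \<ge> 0 \<and> m12 + m23 + m31 = 1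
    \<and> prob_space \<mu>
    \<and> (AE u in \<mu>. \<forall>i. u $ i \<in> {0..1})
    \<and> (\<forall>i::3. distr \<mu> borel (\<lambda>u. u $ i) = uniform_measure lborel {0..1::real})
    \<and> (AE u in \<mu>. w1 * u $ 1 + w2 * u $ 2 + w3 * u $ 3 = (w1 + w2 + w3) / 2)"
proof -
  have A: "z1 \<in> {0..1} \<and> z2 \<in> {0..1} \<and> z3 \<in> {0..1}
    \<and> m12 \<ge> 0 \<and> m23 \<ge> 0 \<and> m31 \<ge> 0 \<and> m12 + m23 + m31 = 1
    \<and> m31 = (1-z3)*(1-m12) \<and> m23 = z3*(1-m12)
    \<and> m12 = (1-z1)*(1-m23) \<and> m31 = z1*(1-m23)
    \<and> m23 = (1-z2)*(1-m31) \<and> m12 = z2*(1-m31)"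
    by (rule alg[OF pos tri, folded z1_def z2_def z3_def, folded P_def, folded m12_def m23_def m31_def])
  then have z: "0 \<le> z1" "z1 \<le> 1" "0 \<le> z2" "z2 \<le> 1" "0 \<le> z3" "z3 \<le> 1"
    and mpos: "m12 \<ge> 0" "m23 \<ge> 0" "m31 \<ge> 0" and msum: "m12 + m23 + m31 = 1"
    and r: "m31 = (1-z3)*(1-m12)" "m23 = z3*(1-m12)"
      "m12 = (1-z1)*(1-m23)" "m31 = z1*(1-m23)"
      "m23 = (1-z2)*(1-m31)" "m12 = z2*(1-m31)" unfolding atLeastAtMost_iff by blast+
  have mle: "m12 \<le> 1" "m23 \<le> 1" "m31 \<le> 1" using mpos msum by linarith+
  have UNIVb: "UNIV \<in> sets (borel :: (real^3) measure)" by simp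
  have prob: "prob_space \<mu>"
  proof (rule prob_spaceI)
    have one: "emeasure (segment_law p q) UNIV = 1" for p q
      using seg_emeasure[OF UNIVb, of p q] by simp
    have "emeasure \<mu> (space \<mu>) = ennreal m12 + ennreal m23 + ennreal m31"
      unfolding \<mu>_def using emeasure_triangle[OF UNIVb] one by simp
    also have "\<dots> = 1" using mpos msum by (simp add: ennreal_plus[symmetric] del: ennreal_plus)
    finally show "emeasure \<mu> (space \<mu>) = 1" .
  qed
  have box: "\<forall>i. p$i \<in> {0..1}" if "p \<in> {p1, p2, p3}" for p
  proof -
    have "\<forall>i. p1$i \<in> {0..1}" "\<forall>i. p2$i \<in> {0..1}" "\<forall>i. p3$i \<in> {0..1}"
      unfolding p1_def p2_def p3_def using z by (intro box3; simp)+
    then show ?thesis using that by blast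
  qed
  have AE1: "AE u in \<mu>. \<forall>i. u $ i \<in> {0..1}"
    unfolding \<mu>_def
  proof (rule AE_tri)
    show "{u::real^3. \<not> (\<forall>i. u $ i \<in> {0..1})} \<in> sets borel" by measurable
  qed (rule conv_box[OF box box]; simp)+
  have pl: "w1 * p$1 + w2 * p$2 + w3 * p$3 = (w1 + w2 + w3) / 2" if "p \<in> {p1, p2, p3}" for p
    using that pos by (auto simp: p1_def p2_def p3_def z1_def z2_def z3_def field_simps)
  have AE2: "AE u in \<mu>. w1 * u $ 1 + w2 * u $ 2 + w3 * u $ 3 = (w1 + w2 + w3) / 2"
    unfolding \<mu>_def
  proof (rule AE_tri)
    show "{u::real^3. \<not> (w1 * u $ 1 + w2 * u $ 2 + w3 * u $ 3 = (w1 + w2 + w3) / 2)} \<in> sets borel" by measurable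
  qed (rule conv_plane[OF pl pl]; simp)+
  have coord: "distr \<mu> borel (\<lambda>u. u$i) = uniform_measure lborel {0..1::real}" for i :: 3
  proof (rule distr_coord)
    show "sets \<mu> = sets borel" "space \<mu> = UNIV" by (simp_all add: \<mu>_def)
    fix A :: "real set" assume A: "A \<in> sets borel"
    have Ab: "{u::real^3. u$i \<in> A} \<in> sets borel" using A by measurable
    have e: "emeasure \<mu> {u. u$i \<in> A} = ennreal m12 * emeasure (segment_law p1 p2) {u. u$i \<in> A}
        + ennreal m23 * emeasure (segment_law p2 p3) {u. u$i \<in> A}
        + ennreal m31 * emeasure (segment_law p3 p1) {u. u$i \<in> A}"
      unfolding \<mu>_def by (rule emeasure_triangle[OF Ab])
    from exhaust_3[of i] show "emeasure \<mu> {u. u$i \<in> A} = emeasure lborel (A \<inter> {0..1})"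
    proof (elim disjE)
      assume i: "i = 1"
      have s1: "ennreal m12 * emeasure (segment_law p1 p2) {u. u$i \<in> A} = ennreal m12 * emeasure lborel (A \<inter> {0..1})"
        by (rule seg_part[OF A mpos(1)]) (simp_all add: i p1_def p2_def)
      have s2: "ennreal m23 * emeasure (segment_law p2 p3) {u. u$i \<in> A} = ennreal (1-m12) * emeasure lborel (A \<inter> {0..z3})"
        by (rule seg_part[OF A]) (use mle z r(2) in \<open>simp_all add: i p2_def p3_def\<close>)
      have s3: "ennreal m31 * emeasure (segment_law p3 p1) {u. u$i \<in> A} = ennreal (1-m12) * emeasure lborel (A \<inter> {z3..1})"
        by (rule seg_part[OF A]) (use mle z r(1) in \<open>simp_all add: i p1_def p3_def\<close>)
      show ?thesis using e s1 s2 s3 combine[OF z(5) z(6) mpos(1) mle(1) A] by simp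
    next
      assume i: "i = 2"
      have s1: "ennreal m12 * emeasure (segment_law p1 p2) {u. u$i \<in> A} = ennreal (1-m23) * emeasure lborel (A \<inter> {z1..1})"
        by (rule seg_part[OF A]) (use mle z r(3) in \<open>simp_all add: i p1_def p2_def\<close>)
      have s2: "ennreal m23 * emeasure (segment_law p2 p3) {u. u$i \<in> A} = ennreal m23 * emeasure lborel (A \<inter> {0..1})"
        by (rule seg_part[OF A mpos(2)]) (simp_all add: i p2_def p3_def)
      have s3: "ennreal m31 * emeasure (segment_law p3 p1) {u. u$i \<in> A} = ennreal (1-m23) * emeasure lborel (A \<inter> {0..z1})"
        by (rule seg_part[OF A]) (use mle z r(4) in \<open>simp_all add: i p1_def p3_def\<close>)
      show ?thesis using e s1 s2 s3 combine[OF z(1) z(2) mpos(2) mle(2) A] by (simp add: ac_simps)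
    next
      assume i: "i = 3"
      have s1: "ennreal m12 * emeasure (segment_law p1 p2) {u. u$i \<in> A} = ennreal (1-m31) * emeasure lborel (A \<inter> {0..z2})"
        by (rule seg_part[OF A]) (use mle z r(6) in \<open>simp_all add: i p1_def p2_def\<close>)
      have s2: "ennreal m23 * emeasure (segment_law p2 p3) {u. u$i \<in> A} = ennreal (1-m31) * emeasure lborel (A \<inter> {z2..1})"
        by (rule seg_part[OF A]) (use mle z r(5) in \<open>simp_all add: i p2_def p3_def\<close>)
      have s3: "ennreal m31 * emeasure (segment_law p3 p1) {u. u$i \<in> A} = ennreal m31 * emeasure lborel (A \<inter> {0..1})"
        by (rule seg_part[OF A mpos(3)]) (simp_all add: i p1_def p3_def)
      show ?thesis using e s1 s2 s3 combine[OF z(3) z(4) mpos(3) mle(3) A] by (simp add: ac_simps)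
    qed
  qed
  show ?thesis using z mpos msum prob AE1 AE2 coord by simp
qed

end
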